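(* Let $F : L_n \to \Delta K$ be a non-degenerate $2$-filtration, fix a dimension $q$, and fix grades $d,h\in L_n$ with $(1,1)\le d$ and $d\le h-(1,1)$. Set $a=d-(1,1)$, $b=d-(1,0)$, $c=d-(0,1)$, $e=h-(1,1)$, $f=h-(1,0)$, $g=h-(0,1)$. If $adeh=1$, then \[\mathsf{Dgm}_q F[d,h]=B\cdot D,\qquad B=1-abeh-aceh,\quad D=1-adef-adeg.\]
   Context: $K$ is a finite simplicial complex, coefficients in a field. $P_n=\{0<\dots<n\}$, $L_n=P_n\times P_n$ with product order, $\bot=(0,0)$, $\top=(n,n)$. $\mathsf{Int}\,L_n=\{[x,y]:x\le y\}$ with $[x,y]\le[z,w]$ iff $x\le z$, $y\le w$. A $2$-filtration is a monotone map $F$ from $L_n$ to subcomplexes of $K$ (ordered by inclusion) with $F(\bot)=\emptyset$, $F(\top)=K$. Birth–death function: $ZB_qF[x,y]=\dim(Z_qF(x)\cap B_qF(y))$ for $y\ne\top$ and $\dim Z_qF(x)$ for $y=\top$, where $Z_q,B_q$ denote $q$-cycles and $q$-boundaries. $\mathsf{Dgm}_qF$ is the unique function on $\mathsf{Int}\,L_n$ with $ZB_qF[z,w]=\sum_{[x,y]\le[z,w]}\mathsf{Dgm}_qF[x,y]$. For a simplex $\sigma$, the minimal elements of the upset $\{x:\sigma\in F(x)\}$ are its lower corners; $F$ is non-degenerate if any two distinct lower corners differ in both coordinates. Notation: for $x\le y$, $xy:=ZB_qF[x,y]$; for $w\le x\le y\le z$, $wxyz:=xz-xy-wz+wy$ (the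 1-parameter Möbius inversion value of the interval $[x,z]$ in the filtration $F(w)\subseteq F(x)\subseteq F(y)\subseteq F(z)$). *)

theory Defs
  imports Complex_Main "HOL-Library.Function_Algebras"
begin

definition simplicial_complex :: "'v set set \<Rightarrow> bool" where
  "simplicial_complex K \<longleftrightarrow>
     (\<forall>\<sigma>\<in>K. finite \<sigma> \<and> \<sigma> \<noteq> {}) \<and>
     (\<forall>\<sigma>\<in>K. \<forall>\<tau>. \<tau> \<subseteq> \<sigma> \<and> \<tau> \<noteq> {} \<longrightarrow> \<tau> \<in> K)"

definition subcomplex :: "'v set set \<Rightarrow> 'v set set \<Rightarrow> bool" where
  "subcomplex L K \<longleftrightarrow> simplicial_complex L \<and> L \<subseteq> K"

text \<open>q-chains of a complex L with coefficients in a field 'k: finitely supported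
 functions on the q-simplices of L (simplices oriented by the vertex order).\<close>

definition chains :: "nat \<Rightarrow> 'v set set \<Rightarrow> ('v set \<Rightarrow> 'k::field) set" where
  "chains q L = {c. \<forall>\<sigma>. c \<sigma> \<noteq> 0 \<longrightarrow> \<sigma> \<in> L \<and> card \<sigma> = q + 1}"

definition bdry :: "'v set set \<Rightarrow> ('v::linorder set \<Rightarrow> 'k::field) \<Rightarrow> ('v set \<Rightarrow> 'k)" where
  "bdry K c = (\<lambda>\<tau>. if \<tau> = {} \<or> infinite \<tau> then 0
      else (\<Sum>v\<in>(\<Union>K) - \<tau>. (-1) ^ card {u\<in>\<tau>. u < v} * c (insert v \<tau>)))"

definition cycles :: "'v set set \<Rightarrow> nat \<Rightarrow> 'v set set \<Rightarrow> ('v::linorder set \<Rightarrow> 'k::field) set" where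
  "cycles K q L = {c \<in> chains q L. bdry K c = 0}"

definition boundaries :: "'v set set \<Rightarrow> nat \<Rightarrow> 'v set set \<Rightarrow> ('v::linorder set \<Rightarrow> 'k::field) set" where
  "boundaries K q L = bdry K ` chains (q + 1) L"

definition chain_scale :: "'k::field \<Rightarrow> ('v set \<Rightarrow> 'k) \<Rightarrow> ('v set \<Rightarrow> 'k)" where
  "chain_scale a c = (\<lambda>\<sigma>. a * c \<sigma>)"

definition vdim :: "('v set \<Rightarrow> 'k::field) set \<Rightarrow> nat" where
  "vdim S = vector_space.dim chain_scale S"

definition grid :: "nat \<Rightarrow> (nat \<times> nat) set" where
  "grid n = {x. fst x \<le> n \<and> snd x \<le> n}"

definition pleq :: "nat \<times> nat \<Rightarrow> nat \<times> nat \<Rightarrow> bool" where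
  "pleq x y \<longleftrightarrow> fst x \<le> fst y \<and> snd x \<le> snd y"

definition two_filtration :: "'v set set \<Rightarrow> nat \<Rightarrow> (nat \<times> nat \<Rightarrow> 'v set set) \<Rightarrow> bool" where
  "two_filtration K n F \<longleftrightarrow>
     (\<forall>x\<in>grid n. subcomplex (F x) K) \<and>
     (\<forall>x\<in>grid n. \<forall>y\<in>grid n. pleq x y \<longrightarrow> F x \<subseteq> F y) \<and>
     F (0, 0) = {} \<and> F (n, n) = K"

definition lower_corners :: "nat \<Rightarrow> (nat \<times> nat \<Rightarrow> 'v set set) \<Rightarrow> 'v set \<Rightarrow> (nat \<times> nat) set" where
  "lower_corners n F \<sigma> = {x \<in> grid n. \<sigma> \<in> F x \<and>
       (\<forall>y\<in>grid n. \<sigma> \<in> F y \<and> pleq y x \<longrightarrow> y = x)}"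

definition non_degenerate :: "nat \<Rightarrow> (nat \<times> nat \<Rightarrow> 'v set set) \<Rightarrow> bool" where
  "non_degenerate n F \<longleftrightarrow>
     (\<forall>\<sigma>. \<forall>x\<in>lower_corners n F \<sigma>. \<forall>y\<in>lower_corners n F \<sigma>.
        x \<noteq> y \<longrightarrow> fst x \<noteq> fst y \<and> snd x \<noteq> snd y)"

definition ZB :: "'v set set \<Rightarrow> nat \<Rightarrow> (nat \<times> nat \<Rightarrow> 'v::linorder set set) \<Rightarrow> 'k::field itself
                  \<Rightarrow> nat \<Rightarrow> nat \<times> nat \<Rightarrow> nat \<times> nat \<Rightarrow> int" where
  "ZB K n F TYPE('k) q x y =
     (if y = (n, n) then int (vdim (cycles K q (F x) :: ('v set \<Rightarrow> 'k) set))
      else int (vdim (cycles K q (F x) \<inter> boundaries K q (F y) :: ('v set \<Rightarrow> 'k) set)))"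

definition intervals :: "nat \<Rightarrow> ((nat \<times> nat) \<times> (nat \<times> nat)) set" where
  "intervals n = {(x, y). x \<in> grid n \<and> y \<in> grid n \<and> pleq x y}"

definition Dgm :: "'v set set \<Rightarrow> nat \<Rightarrow> (nat \<times> nat \<Rightarrow> 'v::linorder set set) \<Rightarrow> 'k::field itself
                  \<Rightarrow> nat \<Rightarrow> nat \<times> nat \<Rightarrow> nat \<times> nat \<Rightarrow> int" where
  "Dgm K n F TYPE('k) q = (THE m.
      (\<forall>x y. (x, y) \<notin> intervals n \<longrightarrow> m x y = 0) \<and>
      (\<forall>(z, w)\<in>intervals n.
         ZB K n F TYPE('k) q z w =
           (\<Sum>(x, y)\<in>{(x, y)\<in>intervals n. pleq x z \<and> pleq y w}. m x y)))"

end

theory Submission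
  imports Defs
begin


definition Tq :: "('b set \<Rightarrow> nat) \<Rightarrow> 'b set \<Rightarrow> 'b set \<Rightarrow> 'b set \<Rightarrow> 'b set \<Rightarrow> int" where
  "Tq dm Za Be X Y = int (dm (X \<inter> Y)) - int (dm (X \<inter> Be)) - int (dm (Za \<inter> Y)) + int (dm (Za \<inter> Be))"

context vector_space begin

lemma dim_le_fin:
  assumes "U \<subseteq> span V" "V \<subseteq> span Wf" "finite Wf"
  shows "dim U \<le> dim V"
proof -
  obtain B where B: "B \<subseteq> U" "independent B" "U \<subseteq> span B" "card B = dim U" by (rule basis_exists)
  obtain C where C: "C \<subseteq> V" "independent C" "V \<subseteq> span C" "card C = dim V" by (rule basis_exists)
  have "C \<subseteq> span Wf" using C(1) assms(2) by auto
  then have fC: "finite C" using independent_span_bound[OF assms(3) C(2)] by auto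
  have "span V \<subseteq> span C" using span_mono[OF C(3)] span_span by blast
  then have "B \<subseteq> span C" using B(1) assms(1) by blast
  then show ?thesis using independent_span_bound[OF fC B(2)] B(4) C(4) by auto
qed

lemma dim_le_fin':
  assumes "U \<subseteq> V" "V \<subseteq> span Wf" "finite Wf"
  shows "dim U \<le> dim V"
  using dim_le_fin[OF _ assms(2,3), of U] assms(1) span_superset[of V] by blast

lemma dim_insert_fin:
  assumes "U \<subseteq> span Wf" "finite Wf" "u \<notin> span U"
  shows "dim (insert u U) = dim U + 1"
proof -
  obtain B where B: "B \<subseteq> U" "independent B" "U \<subseteq> span B" "card B = dim U" by (rule basis_exists)
  have "span U \<subseteq> span B" using span_mono[OF B(3)] span_span by blast
  moreover have "span B \<subseteq> span U" using span_mono[OF B(1)] .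
  ultimately have sB: "span B = span U" by blast
  have uB: "u \<notin> span B" using sB assms(3) by simp
  have iB: "independent (insert u B)" using independent_insertI[OF uB B(2)] .
  have fB: "finite B" using independent_span_bound[OF assms(2) B(2)] B(1) assms(1) by auto
  have "card (insert u B) = dim (insert u U)"
  proof (rule basis_card_eq_dim)
    show "insert u B \<subseteq> insert u U" using B(1) by blast
    show "insert u U \<subseteq> span (insert u B)"
      using B(3) span_mono[of B "insert u B"] span_base[of u "insert u B"] by blast
  qed (rule iB)
  moreover have "u \<notin> B" using uB span_base by blast
  ultimately show ?thesis using fB B(4) by simp
qed

lemma grassmann_fin:
  assumes A: "subspace A" and B: "subspace B" and AW: "A \<subseteq> span Wf" and BW: "B \<subseteq> span Wf"
    and Wf: "finite Wf"
  shows "dim (A \<union> B) + dim (A \<inter> B) = dim A + dim B"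
proof -
  obtain I where I: "I \<subseteq> A \<inter> B" "independent I" "A \<inter> B \<subseteq> span I" "card I = dim (A \<inter> B)"
    by (rule basis_exists)
  obtain IA where IA: "I \<subseteq> IA" "IA \<subseteq> A" "independent IA" "A \<subseteq> span IA"
    using maximal_independent_subset_extend[of I A] I by blast
  obtain IB where IB: "I \<subseteq> IB" "IB \<subseteq> B" "independent IB" "B \<subseteq> span IB"
    using maximal_independent_subset_extend[of I B] I by blast
  have fIA: "finite IA" using independent_span_bound[OF Wf IA(3)] IA(2) AW by auto
  have fIB: "finite IB" using independent_span_bound[OF Wf IB(3)] IB(2) BW by auto
  have cA: "card IA = dim A" using basis_card_eq_dim[OF IA(2) IA(4) IA(3)] .
  have cB: "card IB = dim B" using basis_card_eq_dim[OF IB(2) IB(4) IB(3)] .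
  have spIA: "span IA \<subseteq> A" using span_minimal[OF IA(2) A] .
  have spIB: "span IB \<subseteq> B" using span_minimal[OF IB(2) B] .
  have int: "IA \<inter> IB = I"
  proof
    show "I \<subseteq> IA \<inter> IB" using IA IB by blast
    show "IA \<inter> IB \<subseteq> I"
    proof
      fix x assume x: "x \<in> IA \<inter> IB"
      show "x \<in> I"
      proof (rule ccontr)
        assume "x \<notin> I"
        then have "I \<subseteq> IA - {x}" using IA(1) by blast
        moreover have "x \<in> span I" using x IA(2) IB(2) I(3) by blast
        ultimately have "x \<in> span (IA - {x})" using span_mono by blast
        then have "dependent IA" using x dependent_def by blast
        then show False using IA(3) by blast
      qed
    qed
  qed
  have ind: "finite C \<Longrightarrow> C \<subseteq> IB - I \<Longrightarrow> independent (IA \<union> C)" for C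
  proof (induction C rule: finite_induct)
    case empty
    then show ?case using IA(3) by simp
  next
    case (insert c C)
    have iC: "independent (IA \<union> C)" using insert by blast
    have cIB: "c \<in> IB" "c \<notin> I" using insert.prems by auto
    have "c \<notin> span (IA \<union> C)"
    proof
      assume "c \<in> span (IA \<union> C)"
      then obtain u s where us: "c = u + s" "u \<in> span IA" "s \<in> span C"
        unfolding span_Un by blast
      have uA: "u \<in> A" using us(2) spIA by blast
      have "C \<subseteq> IB" using insert.prems by blast
      then have "s \<in> span IB" using us(3) span_mono by blast
      moreover have "c \<in> span IB" using cIB span_base by blast
      ultimately have "c - s \<in> span IB" using span_diff by blast
      moreover have "c - s = u" using us(1) by simp
      ultimately have "u \<in> B" using spIB by blast
      then have "u \<in> span I" using uA I(3) by blast
      then have "u \<in> span (I \<union> C)" using span_mono[of I "I \<union> C"] by blast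
      moreover have "s \<in> span (I \<union> C)" using us(3) span_mono[of C "I \<union> C"] by blast
      ultimately have "c \<in> span (I \<union> C)" using us(1) span_add by blast
      moreover have "I \<union> C \<subseteq> IB - {c}" using IB(1) insert.hyps(2) cIB(2) \<open>C \<subseteq> IB\<close> by blast
      ultimately have "c \<in> span (IB - {c})" using span_mono by blast
      then have "dependent IB" using cIB(1) dependent_def by blast
      then show False using IB(3) by blast
    qed
    then have "independent (insert c (IA \<union> C))" using independent_insertI iC by blast
    then show ?case by simp
  qed
  have iU: "independent (IA \<union> (IB - I))" using ind[of "IB - I"] fIB by blast
  have U: "IA \<union> (IB - I) = IA \<union> IB" using IA(1) by blast
  have "card (IA \<union> IB) = dim (A \<union> B)"
  proof (rule basis_card_eq_dim)
    show "IA \<union> IB \<subseteq> A \<union> B" using IA IB by blast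
    show "A \<union> B \<subseteq> span (IA \<union> IB)" using IA(4) IB(4) span_mono[of IA "IA \<union> IB"] span_mono[of IB "IA \<union> IB"] by blast
    show "independent (IA \<union> IB)" using iU U by simp
  qed
  moreover have "card (IA \<union> IB) + card (IA \<inter> IB) = card IA + card IB"
    using card_Un_Int[OF fIA fIB] by simp
  ultimately show ?thesis using int cA cB I(4) by simp
qed


lemma Tq_N:
  assumes "subspace Za" "subspace X" "subspace Be" "subspace Y"
    "Za \<subseteq> X" "Be \<subseteq> Y" "X \<subseteq> span Wf" "finite Wf"
  shows "Tq dim Za Be X Y = int (dim (X \<inter> Y)) - int (dim ((X \<inter> Be) \<union> (Za \<inter> Y)))"
proof -
  have "dim ((X \<inter> Be) \<union> (Za \<inter> Y)) + dim ((X \<inter> Be) \<inter> (Za \<inter> Y)) = dim (X \<inter> Be) + dim (Za \<inter> Y)"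
    by (rule grassmann_fin[where Wf=Wf]) (use assms in \<open>auto intro: subspace_inter\<close>)
  moreover have "(X \<inter> Be) \<inter> (Za \<inter> Y) = Za \<inter> Be" using assms by blast
  ultimately show ?thesis unfolding Tq_def by simp
qed

lemma key_incl:
  assumes "subspace Za" "subspace X" "subspace Be" "subspace Y" "subspace X'" "subspace Y'"
    "Za \<subseteq> X" "Be \<subseteq> Y" "X \<subseteq> X'" "Y \<subseteq> Y'"
  shows "(X \<inter> Y) \<inter> span ((X' \<inter> Be) \<union> (Za \<inter> Y')) \<subseteq> span ((X \<inter> Be) \<union> (Za \<inter> Y))"
proof
  fix v assume v: "v \<in> (X \<inter> Y) \<inter> span ((X' \<inter> Be) \<union> (Za \<inter> Y'))"
  then have "v \<in> span ((X' \<inter> Be) \<union> (Za \<inter> Y'))" by blast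
  then have "\<exists>p r. v = p + r \<and> p \<in> span (X' \<inter> Be) \<and> r \<in> span (Za \<inter> Y')"
    unfolding span_Un by (simp only: mem_Collect_eq)
  then obtain p r where pr: "v = p + r" "p \<in> span (X' \<inter> Be)" "r \<in> span (Za \<inter> Y')"
    by blast
  have e1: "span (X' \<inter> Be) = X' \<inter> Be" using span_eq_iff[THEN iffD2, OF subspace_inter[OF assms(5) assms(3)]] .
  have e2: "span (Za \<inter> Y') = Za \<inter> Y'" using span_eq_iff[THEN iffD2, OF subspace_inter[OF assms(1) assms(6)]] .
  have p: "p \<in> X'" "p \<in> Be" using pr(2) unfolding e1 by blast+
  have r: "r \<in> Za" "r \<in> Y'" using pr(3) unfolding e2 by blast+
  have vX: "v \<in> X" "v \<in> Y" using v by blast+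
  have rX: "r \<in> X" using r(1) assms(7) by blast
  have "p = v - r" using pr(1) by simp
  moreover have "v - r \<in> X" using subspace_diff[OF assms(2) vX(1) rX] .
  ultimately have pX: "p \<in> X" by simp
  have pY: "p \<in> Y" using p(2) assms(8) by blast
  have "r = v - p" using pr(1) by simp
  moreover have "v - p \<in> Y" using subspace_diff[OF assms(4) vX(2) pY] .
  ultimately have rY: "r \<in> Y" by simp
  have "p \<in> (X \<inter> Be) \<union> (Za \<inter> Y)" using pX p(2) by blast
  then have "p \<in> span ((X \<inter> Be) \<union> (Za \<inter> Y))" by (rule span_base)
  moreover have "r \<in> (X \<inter> Be) \<union> (Za \<inter> Y)" using rY r(1) by blast
  then have "r \<in> span ((X \<inter> Be) \<union> (Za \<inter> Y))" by (rule span_base)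
  ultimately show "v \<in> span ((X \<inter> Be) \<union> (Za \<inter> Y))" using pr(1) span_add by simp
qed

lemma Tq_nonneg:
  assumes "subspace Za" "subspace X" "subspace Be" "subspace Y"
    "Za \<subseteq> X" "Be \<subseteq> Y" "X \<subseteq> span Wf" "finite Wf"
  shows "Tq dim Za Be X Y \<ge> 0"
proof -
  have "dim ((X \<inter> Be) \<union> (Za \<inter> Y)) \<le> dim (X \<inter> Y)"
    by (rule dim_le_fin'[where Wf=Wf]) (use assms(5,6,7,8) in blast)+
  then show ?thesis using Tq_N[OF assms] by simp
qed

lemma Tq_mono:
  assumes "subspace Za" "subspace X" "subspace Be" "subspace Y" "subspace X'" "subspace Y'"
    "Za \<subseteq> X" "Be \<subseteq> Y" "X \<subseteq> X'" "Y \<subseteq> Y'" "X' \<subseteq> span Wf" "finite Wf"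
  shows "Tq dim Za Be X Y \<le> Tq dim Za Be X' Y'"
proof -
  let ?A = "X \<inter> Y" and ?N = "span ((X \<inter> Be) \<union> (Za \<inter> Y))" and ?N' = "span ((X' \<inter> Be) \<union> (Za \<inter> Y'))"
  have sA: "subspace ?A" using assms by (auto intro: subspace_inter)
  have sXY': "subspace (X' \<inter> Y')" using assms by (auto intro: subspace_inter)
  have XW: "X \<subseteq> span Wf" using assms by blast
  have N'sub: "?N' \<subseteq> X' \<inter> Y'"
    by (rule span_minimal) (use assms sXY' in auto)
  have Nsub: "?N \<subseteq> ?A"
    by (rule span_minimal) (use assms sA in auto)
  have NN': "?N \<subseteq> ?N'" by (rule span_mono) (use assms in auto)
  have eq: "?A \<inter> ?N' = ?N"
    using key_incl[OF assms(1-10)] Nsub NN' by blast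
  have AW: "?A \<subseteq> span Wf" using assms by blast
  have N'W: "?N' \<subseteq> span Wf" using N'sub assms(11) by blast
  have g: "dim (?A \<union> ?N') + dim (?A \<inter> ?N') = dim ?A + dim ?N'"
    by (rule grassmann_fin[OF sA subspace_span AW N'W assms(12)])
  have "dim (?A \<union> ?N') \<le> dim (X' \<inter> Y')"
    by (rule dim_le_fin'[where Wf=Wf]) (use assms(9,10,11,12) N'sub in blast)+
  then have "dim ?A + dim ?N' \<le> dim (X' \<inter> Y') + dim ?N" using g eq by simp
  then have "dim ?A + dim ((X' \<inter> Be) \<union> (Za \<inter> Y')) \<le> dim (X' \<inter> Y') + dim ((X \<inter> Be) \<union> (Za \<inter> Y))"
    by simp
  moreover have "Tq dim Za Be X Y = int (dim ?A) - int (dim ((X \<inter> Be) \<union> (Za \<inter> Y)))"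
    by (rule Tq_N[where Wf=Wf]) (use assms in auto)
  moreover have "Tq dim Za Be X' Y' = int (dim (X' \<inter> Y')) - int (dim ((X' \<inter> Be) \<union> (Za \<inter> Y')))"
    by (rule Tq_N[where Wf=Wf]) (use assms in auto)
  ultimately show ?thesis by linarith
qed

lemma Tq_pos_witness:
  assumes "subspace Za" "subspace X" "subspace Be" "subspace Y"
    "Za \<subseteq> X" "Be \<subseteq> Y" "X \<subseteq> span Wf" "finite Wf" "Tq dim Za Be X Y \<ge> 1"
  obtains z where "z \<in> X \<inter> Y" "z \<notin> span ((X \<inter> Be) \<union> (Za \<inter> Y))"
proof -
  have "\<not> X \<inter> Y \<subseteq> span ((X \<inter> Be) \<union> (Za \<inter> Y))"
  proof
    assume "X \<inter> Y \<subseteq> span ((X \<inter> Be) \<union> (Za \<inter> Y))"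
    then have "dim (X \<inter> Y) \<le> dim ((X \<inter> Be) \<union> (Za \<inter> Y))"
      by (rule dim_le_fin[where Wf=Wf]) (use assms(5,7,8) in \<open>blast+\<close>)
    then show False using Tq_N[OF assms(1-8)] assms(9) by simp
  qed
  then show ?thesis using that by blast
qed

lemma Tq_pos_of_witness:
  assumes "subspace Za" "subspace X" "subspace Be" "subspace Y"
    "Za \<subseteq> X" "Be \<subseteq> Y" "X \<subseteq> span Wf" "finite Wf"
    "z \<in> X \<inter> Y" "z \<notin> span ((X \<inter> Be) \<union> (Za \<inter> Y))"
  shows "Tq dim Za Be X Y \<ge> 1"
proof -
  let ?G = "(X \<inter> Be) \<union> (Za \<inter> Y)"
  have GW: "?G \<subseteq> span Wf" using assms span_base by blast
  have "dim (insert z ?G) = dim ?G + 1" using dim_insert_fin[OF GW assms(8,10)] .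
  moreover have "dim (insert z ?G) \<le> dim (X \<inter> Y)"
    by (rule dim_le_fin'[where Wf=Wf]) (use assms(5,6,7,8,9) in blast)+
  ultimately show ?thesis using Tq_N[OF assms(1-8)] by simp
qed

lemma Tq_prod:
  assumes sub: "subspace Za" "subspace X" "subspace Zd" "subspace Be" "subspace Y" "subspace Bh"
    and inc: "Za \<subseteq> X" "X \<subseteq> Zd" "Be \<subseteq> Y" "Y \<subseteq> Bh" and W: "Zd \<subseteq> span Wf" "finite Wf"
    and one: "Tq dim Za Be Zd Bh = 1" and p1: "Tq dim Za Be X Bh \<ge> 1" and p2: "Tq dim Za Be Zd Y \<ge> 1"
  shows "Tq dim Za Be X Y \<ge> 1"
proof -
  let ?N = "span ((Zd \<inter> Be) \<union> (Za \<inter> Bh))"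
  have XW: "X \<subseteq> span Wf" using inc(2) W(1) by (rule order_trans)
  have ZaZd: "Za \<subseteq> Zd" using inc(1,2) by (rule order_trans)
  have BeBh: "Be \<subseteq> Bh" using inc(3,4) by (rule order_trans)
  obtain z1 where z1: "z1 \<in> X \<inter> Bh" "z1 \<notin> span ((X \<inter> Be) \<union> (Za \<inter> Bh))"
    using Tq_pos_witness[OF sub(1,2,4,6) inc(1) BeBh XW W(2) p1] by blast
  obtain z2 where z2: "z2 \<in> Zd \<inter> Y" "z2 \<notin> span ((Zd \<inter> Be) \<union> (Za \<inter> Y))"
    using Tq_pos_witness[OF sub(1,3,4,5) ZaZd inc(3) W p2] by blast
  have z1N: "z1 \<notin> ?N"
    using key_incl[OF sub(1,2,4,6,3,6) inc(1) BeBh inc(2) order_refl] z1 by blast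
  have z2N: "z2 \<notin> ?N"
    using key_incl[OF sub(1,3,4,5,3,6) ZaZd inc(3) order_refl inc(4)] z2 by blast
  have sW: "subspace (Zd \<inter> Bh)" using subspace_inter[OF sub(3) sub(6)] .
  have gen: "(Zd \<inter> Be) \<union> (Za \<inter> Bh) \<subseteq> Zd \<inter> Bh" using ZaZd BeBh by blast
  have NW: "?N \<subseteq> Zd \<inter> Bh" using span_minimal[OF gen sW] .
  have NWf: "?N \<subseteq> span Wf" using NW W(1) by blast
  have z1W: "z1 \<in> Zd \<inter> Bh" using z1(1) inc(2) by blast
  have z2W: "z2 \<in> Zd \<inter> Bh" using z2(1) inc(4) by blast
  have dN: "dim (insert z1 ?N) = dim ?N + 1" using dim_insert_fin[OF NWf W(2)] z1N span_span by metis
  have TN: "Tq dim Za Be Zd Bh = int (dim (Zd \<inter> Bh)) - int (dim ((Zd \<inter> Be) \<union> (Za \<inter> Bh)))"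
    by (rule Tq_N[OF sub(1,3,4,6) ZaZd BeBh W])
  have z2span: "z2 \<in> span (insert z1 ?N)"
  proof (rule ccontr)
    assume nz: "z2 \<notin> span (insert z1 ?N)"
    have IW: "insert z1 ?N \<subseteq> span Wf" using NWf z1W W(1) by blast
    have d2: "dim (insert z2 (insert z1 ?N)) = dim (insert z1 ?N) + 1"
      using dim_insert_fin[OF IW W(2) nz] .
    have sub3: "insert z2 (insert z1 ?N) \<subseteq> Zd \<inter> Bh" using NW z1W z2W by blast
    have "dim (insert z2 (insert z1 ?N)) \<le> dim (Zd \<inter> Bh)"
      using dim_le_fin'[OF sub3 _ W(2)] W(1) by blast
    then show False using one d2 dN TN by simp
  qed
  then obtain k where k: "z2 - k *s z1 \<in> ?N" using span_breakdown_eq[THEN iffD1, OF z2span] unfolding span_span by blast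
  have k0: "k \<noteq> 0"
  proof
    assume "k = 0"
    then have "z2 \<in> ?N" using k by simp
    then show False using z2N by blast
  qed
  have "\<exists>p r. z2 - k *s z1 = p + r \<and> p \<in> span (Zd \<inter> Be) \<and> r \<in> span (Za \<inter> Bh)"
    using k unfolding span_Un by (simp only: mem_Collect_eq)
  then obtain p r where pr: "z2 - k *s z1 = p + r" "p \<in> span (Zd \<inter> Be)" "r \<in> span (Za \<inter> Bh)"
    by blast
  have e1: "span (Zd \<inter> Be) = Zd \<inter> Be" using span_eq_iff[THEN iffD2, OF subspace_inter[OF sub(3) sub(4)]] .
  have e2: "span (Za \<inter> Bh) = Za \<inter> Bh" using span_eq_iff[THEN iffD2, OF subspace_inter[OF sub(1) sub(6)]] .
  have p: "p \<in> Be" using pr(2) unfolding e1 by blast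
  have r: "r \<in> Za" "r \<in> Bh" using pr(3) unfolding e2 by blast+
  define v where "v = k *s z1 + r"
  have kz: "k *s z1 \<in> X" using subspace_scale[OF sub(2)] z1(1) by blast
  have rX: "r \<in> X" using r(1) inc(1) by blast
  have vX: "v \<in> X" unfolding v_def using subspace_add[OF sub(2) kz rX] .
  have "v = z2 - p" unfolding v_def using pr(1) by (simp add: algebra_simps)
  moreover have "z2 - p \<in> Y" using subspace_diff[OF sub(5)] z2(1) p inc(3) by blast
  ultimately have vY: "v \<in> Y" by simp
  have vN: "v \<notin> span ((X \<inter> Be) \<union> (Za \<inter> Y))"
  proof
    assume "v \<in> span ((X \<inter> Be) \<union> (Za \<inter> Y))"
    moreover have "(X \<inter> Be) \<union> (Za \<inter> Y) \<subseteq> (Zd \<inter> Be) \<union> (Za \<inter> Bh)" using inc by blast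
    then have "span ((X \<inter> Be) \<union> (Za \<inter> Y)) \<subseteq> ?N" by (rule span_mono)
    ultimately have vN: "v \<in> ?N" by blast
    have "r \<in> (Zd \<inter> Be) \<union> (Za \<inter> Bh)" using r by blast
    then have "r \<in> ?N" by (rule span_base)
    then have "v - r \<in> ?N" using vN span_diff by blast
    then have "k *s z1 \<in> ?N" unfolding v_def by simp
    then have "(inverse k) *s (k *s z1) \<in> ?N" by (rule span_scale)
    then have "z1 \<in> ?N" using k0 by simp
    then show False using z1N by blast
  qed
  have vXY: "v \<in> X \<inter> Y" using vX vY by blast
  show ?thesis
    by (rule Tq_pos_of_witness[OF sub(1,2,4,5) inc(1,3) XW W(2) vXY vN])
qed

lemma Tq_01:
  assumes "subspace Za" "subspace X" "subspace Zd" "subspace Be" "subspace Y" "subspace Bh"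
    "Za \<subseteq> X" "X \<subseteq> Zd" "Be \<subseteq> Y" "Y \<subseteq> Bh" "Zd \<subseteq> span Wf" "finite Wf"
    "Tq dim Za Be Zd Bh = 1"
  shows "Tq dim Za Be X Y = 0 \<or> Tq dim Za Be X Y = 1"
proof -
  have XW: "X \<subseteq> span Wf" using assms(8,11) by (rule order_trans)
  have "Tq dim Za Be X Y \<ge> 0" by (rule Tq_nonneg[OF assms(1,2,4,5,7,9) XW assms(12)])
  moreover have "Tq dim Za Be X Y \<le> Tq dim Za Be Zd Bh"
    by (rule Tq_mono[OF assms(1,2,4,5,3,6,7,9,8,10,11,12)])
  ultimately show ?thesis using assms(13) by linarith
qed

lemma Tq_product:
  assumes sub: "subspace Za" "subspace X" "subspace Zd" "subspace Be" "subspace Y" "subspace Bh"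
    and inc: "Za \<subseteq> X" "X \<subseteq> Zd" "Be \<subseteq> Y" "Y \<subseteq> Bh" and W: "Zd \<subseteq> span Wf" "finite Wf"
    and one: "Tq dim Za Be Zd Bh = 1"
  shows "Tq dim Za Be X Y = Tq dim Za Be X Bh * Tq dim Za Be Zd Y"
proof -
  have ZaZd: "Za \<subseteq> Zd" using inc(1,2) by (rule order_trans)
  have BeBh: "Be \<subseteq> Bh" using inc(3,4) by (rule order_trans)
  have XW: "X \<subseteq> span Wf" using inc(2) W(1) by (rule order_trans)
  have a: "Tq dim Za Be X Y = 0 \<or> Tq dim Za Be X Y = 1" by (rule Tq_01[OF assms])
  have b: "Tq dim Za Be X Bh = 0 \<or> Tq dim Za Be X Bh = 1"
    by (rule Tq_01[OF sub(1,2,3,4,6,6) inc(1,2) BeBh order_refl W one])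
  have c: "Tq dim Za Be Zd Y = 0 \<or> Tq dim Za Be Zd Y = 1"
    by (rule Tq_01[OF sub(1,3,3,4,5,6) ZaZd order_refl inc(3,4) W one])
  have m1: "Tq dim Za Be X Y \<le> Tq dim Za Be X Bh"
    by (rule Tq_mono[OF sub(1,2,4,5,2,6) inc(1,3) order_refl inc(4) XW W(2)])
  have m2: "Tq dim Za Be X Y \<le> Tq dim Za Be Zd Y"
    by (rule Tq_mono[OF sub(1,2,4,5,3,5) inc(1,3,2) order_refl W])
  have p: "Tq dim Za Be X Bh \<ge> 1 \<Longrightarrow> Tq dim Za Be Zd Y \<ge> 1 \<Longrightarrow> Tq dim Za Be X Y \<ge> 1"
    by (rule Tq_prod[OF assms])
  show ?thesis using a b c m1 m2 p by auto
qed

lemma abstract_main: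
  assumes sub: "subspace Za" "subspace Zb" "subspace Zc" "subspace Zd"
    "subspace Be" "subspace Bf" "subspace Bg" "subspace Bh"
    and inc: "Za \<subseteq> Zb" "Za \<subseteq> Zc" "Zb \<subseteq> Zd" "Zc \<subseteq> Zd"
      "Be \<subseteq> Bf" "Be \<subseteq> Bg" "Bf \<subseteq> Bh" "Bg \<subseteq> Bh"
    and W: "Zd \<subseteq> span Wf" "finite Wf"
    and one: "Tq dim Za Be Zd Bh = 1"
  shows "int (dim (Zd \<inter> Bh)) - int (dim (Zb \<inter> Bh)) - int (dim (Zc \<inter> Bh)) + int (dim (Za \<inter> Bh))
       - (int (dim (Zd \<inter> Bf)) - int (dim (Zb \<inter> Bf)) - int (dim (Zc \<inter> Bf)) + int (dim (Za \<inter> Bf)))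
       - (int (dim (Zd \<inter> Bg)) - int (dim (Zb \<inter> Bg)) - int (dim (Zc \<inter> Bg)) + int (dim (Za \<inter> Bg)))
       + (int (dim (Zd \<inter> Be)) - int (dim (Zb \<inter> Be)) - int (dim (Zc \<inter> Be)) + int (dim (Za \<inter> Be)))
     = (1 - Tq dim Za Be Zb Bh - Tq dim Za Be Zc Bh) * (1 - Tq dim Za Be Zd Bf - Tq dim Za Be Zd Bg)"
proof -
  have bf: "Tq dim Za Be Zb Bf = Tq dim Za Be Zb Bh * Tq dim Za Be Zd Bf"
    by (rule Tq_product[OF sub(1,2,4,5,6,8) inc(1,3,5,7) W one])
  have bg: "Tq dim Za Be Zb Bg = Tq dim Za Be Zb Bh * Tq dim Za Be Zd Bg"
    by (rule Tq_product[OF sub(1,2,4,5,7,8) inc(1,3,6,8) W one])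
  have cf: "Tq dim Za Be Zc Bf = Tq dim Za Be Zc Bh * Tq dim Za Be Zd Bf"
    by (rule Tq_product[OF sub(1,3,4,5,6,8) inc(2,4,5,7) W one])
  have cg: "Tq dim Za Be Zc Bg = Tq dim Za Be Zc Bh * Tq dim Za Be Zd Bg"
    by (rule Tq_product[OF sub(1,3,4,5,7,8) inc(2,4,6,8) W one])
  have lin: "int (dim (Zd \<inter> Bh)) - int (dim (Zb \<inter> Bh)) - int (dim (Zc \<inter> Bh)) + int (dim (Za \<inter> Bh))
       - (int (dim (Zd \<inter> Bf)) - int (dim (Zb \<inter> Bf)) - int (dim (Zc \<inter> Bf)) + int (dim (Za \<inter> Bf)))
       - (int (dim (Zd \<inter> Bg)) - int (dim (Zb \<inter> Bg)) - int (dim (Zc \<inter> Bg)) + int (dim (Za \<inter> Bg)))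
       + (int (dim (Zd \<inter> Be)) - int (dim (Zb \<inter> Be)) - int (dim (Zc \<inter> Be)) + int (dim (Za \<inter> Be)))
     = Tq dim Za Be Zd Bh - Tq dim Za Be Zb Bh - Tq dim Za Be Zc Bh - Tq dim Za Be Zd Bf - Tq dim Za Be Zd Bg
       + Tq dim Za Be Zb Bf + Tq dim Za Be Zb Bg + Tq dim Za Be Zc Bf + Tq dim Za Be Zc Bg"
    unfolding Tq_def by simp
  show ?thesis unfolding lin bf bg cf cg one by (simp add: algebra_simps)
qed

end


definition eqs :: "nat \<Rightarrow> (nat \<times> nat \<Rightarrow> nat \<times> nat \<Rightarrow> int) \<Rightarrow> (nat \<times> nat \<Rightarrow> nat \<times> nat \<Rightarrow> int) \<Rightarrow> bool" where
  "eqs n Z m \<longleftrightarrow> (\<forall>x y. (x, y) \<notin> intervals n \<longrightarrow> m x y = 0) \<and>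
      (\<forall>(z, w)\<in>intervals n. Z z w = (\<Sum>(x, y)\<in>{(x, y)\<in>intervals n. pleq x z \<and> pleq y w}. m x y))"

definition rk :: "nat \<times> nat \<Rightarrow> nat \<times> nat \<Rightarrow> nat" where
  "rk z w = fst z + snd z + fst w + snd w"

lemma finite_intervals: "finite (intervals n)"
proof -
  have "intervals n \<subseteq> ({..n} \<times> {..n}) \<times> ({..n} \<times> {..n})"
    unfolding intervals_def grid_def by auto
  then show ?thesis by (rule finite_subset) auto
qed

lemma rk_less: "pleq x z \<Longrightarrow> pleq y w \<Longrightarrow> (x, y) \<noteq> (z, w) \<Longrightarrow> rk x y < rk z w"
  unfolding pleq_def rk_def by (cases x, cases y, cases z, cases w) auto

lemma rk_bound: "(z, w) \<in> intervals n \<Longrightarrow> rk z w \<le> 4 * n"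
  unfolding intervals_def grid_def rk_def by auto

lemma split_D:
  assumes "(z, w) \<in> intervals n"
  shows "(\<Sum>(x, y)\<in>{(x, y)\<in>intervals n. pleq x z \<and> pleq y w}. m x y)
       = m z w + (\<Sum>(x, y)\<in>{(x, y)\<in>intervals n. pleq x z \<and> pleq y w \<and> (x, y) \<noteq> (z, w)}. m x y)"
proof -
  let ?D = "{(x, y)\<in>intervals n. pleq x z \<and> pleq y w}"
  have fD: "finite ?D" by (rule finite_subset[OF _ finite_intervals[of n]]) auto
  have zD: "(z, w) \<in> ?D" using assms by (simp add: pleq_def)
  have eq: "{(x, y)\<in>intervals n. pleq x z \<and> pleq y w \<and> (x, y) \<noteq> (z, w)} = ?D - {(z, w)}" by auto
  show ?thesis unfolding eq using sum.remove[OF fD zD, of "\<lambda>(x, y). m x y"] by simp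
qed

lemma eqs_unique:
  assumes "eqs n Z m1" "eqs n Z m2"
  shows "m1 = m2"
proof -
  have "\<forall>z w. rk z w = k \<longrightarrow> m1 z w = m2 z w" for k
  proof (induction k rule: less_induct)
    case (less k)
    show ?case
    proof (intro allI impI)
      fix z w assume rkk: "rk z w = k"
      show "m1 z w = m2 z w"
      proof (cases "(z, w) \<in> intervals n")
        case False
        have "m1 z w = 0" using assms(1) False unfolding eqs_def by blast
        moreover have "m2 z w = 0" using assms(2) False unfolding eqs_def by blast
        ultimately show ?thesis by simp
      next
        case True
        let ?S = "{(x, y)\<in>intervals n. pleq x z \<and> pleq y w \<and> (x, y) \<noteq> (z, w)}"
        have "(\<Sum>(x, y)\<in>?S. m1 x y) = (\<Sum>(x, y)\<in>?S. m2 x y)"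
        proof (rule sum.cong[OF refl])
          fix p assume "p \<in> ?S"
          then obtain x y where p: "p = (x, y)" "pleq x z" "pleq y w" "(x, y) \<noteq> (z, w)" by auto
          then have "rk x y < k" using rk_less rkk by blast
          then have "m1 x y = m2 x y" using less by blast
          then show "(case p of (x, y) \<Rightarrow> m1 x y) = (case p of (x, y) \<Rightarrow> m2 x y)"
            using p(1) by simp
        qed
        moreover have "Z z w = m1 z w + (\<Sum>(x, y)\<in>?S. m1 x y)"
          using assms(1) True split_D[OF True, of m1] unfolding eqs_def by auto
        moreover have "Z z w = m2 z w + (\<Sum>(x, y)\<in>?S. m2 x y)"
          using assms(2) True split_D[OF True, of m2] unfolding eqs_def by auto
        ultimately show ?thesis by simp
      qed
    qed
  qed
  then show ?thesis by (intro ext) blast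
qed

primrec mm :: "(nat \<times> nat \<Rightarrow> nat \<times> nat \<Rightarrow> int) \<Rightarrow> nat \<Rightarrow> nat \<Rightarrow> nat \<times> nat \<Rightarrow> nat \<times> nat \<Rightarrow> int" where
  "mm Z n 0 = (\<lambda>z w. 0)"
| "mm Z n (Suc k) = (\<lambda>z w. if (z, w) \<in> intervals n then
      Z z w - (\<Sum>(x, y)\<in>{(x, y)\<in>intervals n. pleq x z \<and> pleq y w \<and> (x, y) \<noteq> (z, w)}. mm Z n k x y)
    else 0)"

lemma mm_stable: "\<forall>z w. rk z w < k \<longrightarrow> mm Z n (Suc k) z w = mm Z n k z w"
proof (induction k)
  case 0
  then show ?case by simp
next
  case (Suc k)
  show ?case
  proof (intro allI impI)
    fix z w assume r: "rk z w < Suc k"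
    let ?S = "{(x, y)\<in>intervals n. pleq x z \<and> pleq y w \<and> (x, y) \<noteq> (z, w)}"
    have "(\<Sum>(x, y)\<in>?S. mm Z n (Suc k) x y) = (\<Sum>(x, y)\<in>?S. mm Z n k x y)"
    proof (rule sum.cong[OF refl])
      fix p assume "p \<in> ?S"
      then obtain x y where p: "p = (x, y)" "pleq x z" "pleq y w" "(x, y) \<noteq> (z, w)" by auto
      then have "rk x y < k" using rk_less r by fastforce
      then have "mm Z n (Suc k) x y = mm Z n k x y" using Suc.IH by blast
      then show "(case p of (x, y) \<Rightarrow> mm Z n (Suc k) x y) = (case p of (x, y) \<Rightarrow> mm Z n k x y)"
        using p(1) by simp
    qed
    then show "mm Z n (Suc (Suc k)) z w = mm Z n (Suc k) z w"
      by (simp only: mm.simps)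
  qed
qed

lemma eqs_exists: "\<exists>m. eqs n Z m"
proof -
  define M where "M = Suc (4 * n)"
  define m where "m = mm Z n M"
  have "eqs n Z m"
    unfolding eqs_def
  proof (intro conjI allI impI ballI)
    fix x y assume "(x, y) \<notin> intervals n"
    then show "m x y = 0" unfolding m_def M_def by simp
  next
    fix p assume pI: "p \<in> intervals n"
    obtain z w where p: "p = (z, w)" by (cases p)
    have zI: "(z, w) \<in> intervals n" using pI p by simp
    have "rk z w < M" using rk_bound[OF zI] unfolding M_def by simp
    then have "m z w = mm Z n (Suc M) z w" unfolding m_def using mm_stable by metis
    also have "\<dots> = Z z w - (\<Sum>(x, y)\<in>{(x, y)\<in>intervals n. pleq x z \<and> pleq y w \<and> (x, y) \<noteq> (z, w)}. m x y)"
      using zI unfolding m_def by simp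
    finally have "Z z w = m z w + (\<Sum>(x, y)\<in>{(x, y)\<in>intervals n. pleq x z \<and> pleq y w \<and> (x, y) \<noteq> (z, w)}. m x y)"
      by simp
    then show "case p of (z, w) \<Rightarrow> Z z w = (\<Sum>(x, y)\<in>{(x, y)\<in>intervals n. pleq x z \<and> pleq y w}. m x y)"
      using split_D[OF zI, of m] p by simp
  qed
  then show ?thesis by blast
qed

lemma Dgm_eqs: "eqs n (ZB K n F TYPE('k::field) q) (Dgm K n F TYPE('k) q)"
proof -
  have ex: "\<exists>!m. eqs n (ZB K n F TYPE('k) q) m"
    using eqs_exists eqs_unique by blast
  have "Dgm K n F TYPE('k) q = (THE m. eqs n (ZB K n F TYPE('k) q) m)"
    unfolding Dgm_def eqs_def by simp
  then show ?thesis using theI'[OF ex] by simp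
qed

definition ind :: "nat \<times> nat \<Rightarrow> nat \<times> nat \<Rightarrow> (nat \<times> nat) \<times> (nat \<times> nat) \<Rightarrow> int" where
  "ind z w p = of_bool (pleq (fst p) z \<and> pleq (snd p) w)"

lemma ind_prod: "ind (z1, z2) (w1, w2) ((x1, x2), (y1, y2)) =
   of_bool (x1 \<le> z1) * of_bool (x2 \<le> z2) * of_bool (y1 \<le> w1) * of_bool (y2 \<le> w2)"
  unfolding ind_def pleq_def by simp

lemma Zsum:
  assumes "eqs n Z m" "(z, w) \<in> intervals n"
  shows "Z z w = (\<Sum>p\<in>intervals n. m (fst p) (snd p) * ind z w p)"
proof -
  have "Z z w = (\<Sum>(x, y)\<in>{(x, y)\<in>intervals n. pleq x z \<and> pleq y w}. m x y)"
    using assms unfolding eqs_def by blast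
  also have "{(x, y)\<in>intervals n. pleq x z \<and> pleq y w} = {p\<in>intervals n. pleq (fst p) z \<and> pleq (snd p) w}"
    by auto
  also have "(\<Sum>(x, y)\<in>{p\<in>intervals n. pleq (fst p) z \<and> pleq (snd p) w}. m x y)
      = (\<Sum>p\<in>intervals n. if pleq (fst p) z \<and> pleq (snd p) w then m (fst p) (snd p) else 0)"
    using sum.inter_filter[OF finite_intervals, of "\<lambda>p. m (fst p) (snd p)"]
    by (simp add: case_prod_beta')
  also have "\<dots> = (\<Sum>p\<in>intervals n. m (fst p) (snd p) * ind z w p)"
    unfolding ind_def by (rule sum.cong) auto
  finally show ?thesis .
qed

lemma coeff16:
  fixes x1 x2 y1 y2 d1 d2 h1 h2 :: nat
  assumes "1 \<le> d1" "1 \<le> d2" "1 \<le> h1" "1 \<le> h2"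
  shows "ind (d1, d2) (h1, h2) ((x1, x2), (y1, y2)) - ind (d1 - 1, d2) (h1, h2) ((x1, x2), (y1, y2))
      - ind (d1, d2 - 1) (h1, h2) ((x1, x2), (y1, y2)) + ind (d1 - 1, d2 - 1) (h1, h2) ((x1, x2), (y1, y2))
    - (ind (d1, d2) (h1 - 1, h2) ((x1, x2), (y1, y2)) - ind (d1 - 1, d2) (h1 - 1, h2) ((x1, x2), (y1, y2))
      - ind (d1, d2 - 1) (h1 - 1, h2) ((x1, x2), (y1, y2)) + ind (d1 - 1, d2 - 1) (h1 - 1, h2) ((x1, x2), (y1, y2)))
    - (ind (d1, d2) (h1, h2 - 1) ((x1, x2), (y1, y2)) - ind (d1 - 1, d2) (h1, h2 - 1) ((x1, x2), (y1, y2))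
      - ind (d1, d2 - 1) (h1, h2 - 1) ((x1, x2), (y1, y2)) + ind (d1 - 1, d2 - 1) (h1, h2 - 1) ((x1, x2), (y1, y2)))
    + (ind (d1, d2) (h1 - 1, h2 - 1) ((x1, x2), (y1, y2)) - ind (d1 - 1, d2) (h1 - 1, h2 - 1) ((x1, x2), (y1, y2))
      - ind (d1, d2 - 1) (h1 - 1, h2 - 1) ((x1, x2), (y1, y2)) + ind (d1 - 1, d2 - 1) (h1 - 1, h2 - 1) ((x1, x2), (y1, y2)))
    = of_bool (((x1, x2), (y1, y2)) = ((d1, d2), (h1, h2)))"
proof -
  have f1: "of_bool (x1 \<le> d1) - of_bool (x1 \<le> d1 - 1) = (of_bool (x1 = d1) :: int)" using assms by auto
  have f2: "of_bool (x2 \<le> d2) - of_bool (x2 \<le> d2 - 1) = (of_bool (x2 = d2) :: int)" using assms by auto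
  have f3: "of_bool (y1 \<le> h1) - of_bool (y1 \<le> h1 - 1) = (of_bool (y1 = h1) :: int)" using assms by auto
  have f4: "of_bool (y2 \<le> h2) - of_bool (y2 \<le> h2 - 1) = (of_bool (y2 = h2) :: int)" using assms by auto
  let ?A = "of_bool (x1 \<le> d1) :: int" and ?A' = "of_bool (x1 \<le> d1 - 1) :: int"
  let ?B = "of_bool (x2 \<le> d2) :: int" and ?B' = "of_bool (x2 \<le> d2 - 1) :: int"
  let ?C = "of_bool (y1 \<le> h1) :: int" and ?C' = "of_bool (y1 \<le> h1 - 1) :: int"
  let ?D = "of_bool (y2 \<le> h2) :: int" and ?D' = "of_bool (y2 \<le> h2 - 1) :: int"
  have "(?A - ?A') * (?B - ?B') * (?C - ?C') * (?D - ?D') = of_bool (((x1, x2), (y1, y2)) = ((d1, d2), (h1, h2)))"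
    unfolding f1 f2 f3 f4 by simp
  moreover have "(?A - ?A') * (?B - ?B') * (?C - ?C') * (?D - ?D') =
    ind (d1, d2) (h1, h2) ((x1, x2), (y1, y2)) - ind (d1 - 1, d2) (h1, h2) ((x1, x2), (y1, y2))
      - ind (d1, d2 - 1) (h1, h2) ((x1, x2), (y1, y2)) + ind (d1 - 1, d2 - 1) (h1, h2) ((x1, x2), (y1, y2))
    - (ind (d1, d2) (h1 - 1, h2) ((x1, x2), (y1, y2)) - ind (d1 - 1, d2) (h1 - 1, h2) ((x1, x2), (y1, y2))
      - ind (d1, d2 - 1) (h1 - 1, h2) ((x1, x2), (y1, y2)) + ind (d1 - 1, d2 - 1) (h1 - 1, h2) ((x1, x2), (y1, y2)))
    - (ind (d1, d2) (h1, h2 - 1) ((x1, x2), (y1, y2)) - ind (d1 - 1, d2) (h1, h2 - 1) ((x1, x2), (y1, y2))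
      - ind (d1, d2 - 1) (h1, h2 - 1) ((x1, x2), (y1, y2)) + ind (d1 - 1, d2 - 1) (h1, h2 - 1) ((x1, x2), (y1, y2)))
    + (ind (d1, d2) (h1 - 1, h2 - 1) ((x1, x2), (y1, y2)) - ind (d1 - 1, d2) (h1 - 1, h2 - 1) ((x1, x2), (y1, y2))
      - ind (d1, d2 - 1) (h1 - 1, h2 - 1) ((x1, x2), (y1, y2)) + ind (d1 - 1, d2 - 1) (h1 - 1, h2 - 1) ((x1, x2), (y1, y2)))"
    unfolding ind_prod by (simp only: algebra_simps)
  ultimately show ?thesis by simp
qed

lemma eqs_16:
  assumes E: "eqs n Z m" and dg: "d \<in> grid n" and hg: "h \<in> grid n"
    and d1: "pleq (1, 1) d" and dh: "pleq d (fst h - 1, snd h - 1)"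
  defines "a \<equiv> (fst d - 1, snd d - 1)" and "b \<equiv> (fst d - 1, snd d)"
    and "c \<equiv> (fst d, snd d - 1)" and "e \<equiv> (fst h - 1, snd h - 1)"
    and "f \<equiv> (fst h - 1, snd h)" and "g \<equiv> (fst h, snd h - 1)"
  shows "m d h = Z d h - Z b h - Z c h + Z a h - (Z d f - Z b f - Z c f + Z a f)
     - (Z d g - Z b g - Z c g + Z a g) + (Z d e - Z b e - Z c e + Z a e)"
proof -
  obtain d1 d2 where dd: "d = (d1, d2)" by (cases d)
  obtain h1 h2 where hh: "h = (h1, h2)" by (cases h)
  have c1: "1 \<le> d1" "1 \<le> d2" "d1 + 1 \<le> h1" "d2 + 1 \<le> h2" "h1 \<le> n" "h2 \<le> n"
    using d1 dh hg unfolding dd hh pleq_def grid_def by auto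
  have I: "(x, y) \<in> intervals n"
    if "x \<in> {(d1, d2), (d1 - 1, d2), (d1, d2 - 1), (d1 - 1, d2 - 1)}"
       "y \<in> {(h1, h2), (h1 - 1, h2), (h1, h2 - 1), (h1 - 1, h2 - 1)}" for x y
    using that c1 unfolding intervals_def grid_def pleq_def by auto
  let ?mp = "\<lambda>p. m (fst p) (snd p)"
  have dhI: "(d, h) \<in> intervals n" using I dd hh by simp
  have "(\<Sum>p\<in>intervals n. ?mp p * of_bool (p = (d, h))) = m d h"
  proof -
    have "(\<Sum>p\<in>intervals n. ?mp p * of_bool (p = (d, h))) = (\<Sum>p\<in>intervals n. if p = (d, h) then ?mp p else 0)"
      by (rule sum.cong) auto
    also have "\<dots> = m d h" using sum.delta[OF finite_intervals, of "(d, h)" ?mp] dhI by simp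
    finally show ?thesis .
  qed
  moreover have "(\<Sum>p\<in>intervals n. ?mp p * of_bool (p = (d, h))) =
    (\<Sum>p\<in>intervals n. ?mp p * (ind d h p - ind b h p - ind c h p + ind a h p - (ind d f p - ind b f p - ind c f p + ind a f p)
     - (ind d g p - ind b g p - ind c g p + ind a g p) + (ind d e p - ind b e p - ind c e p + ind a e p)))"
  proof (rule sum.cong[OF refl])
    fix p :: "(nat \<times> nat) \<times> (nat \<times> nat)"
    obtain x1 x2 y1 y2 where p: "p = ((x1, x2), (y1, y2))" by (cases p) auto
    show "?mp p * of_bool (p = (d, h)) = ?mp p * (ind d h p - ind b h p - ind c h p + ind a h p - (ind d f p - ind b f p - ind c f p + ind a f p)
     - (ind d g p - ind b g p - ind c g p + ind a g p) + (ind d e p - ind b e p - ind c e p + ind a e p))"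
      unfolding a_def b_def c_def e_def f_def g_def dd hh p fst_conv snd_conv
      using coeff16[OF c1(1,2), of h1 h2 x1 x2 y1 y2] c1 by simp
  qed
  moreover have "(\<Sum>p\<in>intervals n. ?mp p * (ind d h p - ind b h p - ind c h p + ind a h p - (ind d f p - ind b f p - ind c f p + ind a f p)
     - (ind d g p - ind b g p - ind c g p + ind a g p) + (ind d e p - ind b e p - ind c e p + ind a e p)))
    = Z d h - Z b h - Z c h + Z a h - (Z d f - Z b f - Z c f + Z a f)
     - (Z d g - Z b g - Z c g + Z a g) + (Z d e - Z b e - Z c e + Z a e)"
  proof -
    have Zs: "Z x y = (\<Sum>p\<in>intervals n. ?mp p * ind x y p)"
      if "x \<in> {a, b, c, d}" "y \<in> {e, f, g, h}" for x y
      using Zsum[OF E I] that unfolding a_def b_def c_def e_def f_def g_def dd hh by auto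
    show ?thesis
      by (simp only: Zs insertI1 insertI2 singletonI sum.distrib sum_subtractf distrib_left right_diff_distrib)
  qed
  ultimately show ?thesis by simp
qed



lemma vs_chain: "vector_space (chain_scale :: 'k::field \<Rightarrow> ('v set \<Rightarrow> 'k) \<Rightarrow> ('v set \<Rightarrow> 'k))"
  by unfold_locales (simp_all add: chain_scale_def fun_eq_iff algebra_simps)

interpretation cs: vector_space "chain_scale :: 'k::field \<Rightarrow> ('v set \<Rightarrow> 'k) \<Rightarrow> ('v set \<Rightarrow> 'k)"
  by (rule vs_chain)

lemma sum_fun_apply': "(\<Sum>i\<in>A. f i) x = (\<Sum>i\<in>A. f i x)"
  by (induction A rule: infinite_finite_induct) auto

lemma bdry_add: "bdry K (x + y) = bdry K x + bdry K y"
  unfolding bdry_def by (simp add: fun_eq_iff algebra_simps sum.distrib)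

lemma bdry_scale: "bdry K (chain_scale a x) = chain_scale a (bdry K x)"
  unfolding bdry_def chain_scale_def by (simp add: fun_eq_iff algebra_simps sum_distrib_left)

lemma bdry_zero: "bdry K 0 = 0"
  unfolding bdry_def by (simp add: fun_eq_iff)

lemma chains_sub: "cs.subspace (chains q L :: ('v set \<Rightarrow> 'k::field) set)"
  unfolding cs.subspace_def chains_def chain_scale_def
  apply (auto simp: fun_eq_iff)
  by (metis add.left_neutral)+

lemma cycles_sub: "cs.subspace (cycles K q L :: ('v::linorder set \<Rightarrow> 'k::field) set)"
proof -
  have S: "cs.subspace (chains q L :: ('v set \<Rightarrow> 'k) set)" by (rule chains_sub)
  have z: "chain_scale c (0 :: 'v set \<Rightarrow> 'k) = 0" for c by (simp add: chain_scale_def fun_eq_iff)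
  show ?thesis unfolding cs.subspace_def cycles_def
    using cs.subspace_0[OF S] cs.subspace_add[OF S] cs.subspace_scale[OF S]
    by (auto simp: bdry_add bdry_scale bdry_zero z)
qed

lemma boundaries_sub: "cs.subspace (boundaries K q L :: ('v::linorder set \<Rightarrow> 'k::field) set)"
proof -
  have S: "cs.subspace (chains (q + 1) L :: ('v set \<Rightarrow> 'k) set)" by (rule chains_sub)
  show ?thesis
    unfolding cs.subspace_def boundaries_def
  proof (intro conjI ballI allI)
    show "(0 :: 'v set \<Rightarrow> 'k) \<in> bdry K ` chains (q + 1) L"
      using cs.subspace_0[OF S] bdry_zero[of K] by (metis image_eqI)
  next
    fix x y :: "'v set \<Rightarrow> 'k" assume "x \<in> bdry K ` chains (q + 1) L" "y \<in> bdry K ` chains (q + 1) L"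
    then obtain x' y' where "x' \<in> chains (q + 1) L" "y' \<in> chains (q + 1) L" "x = bdry K x'" "y = bdry K y'" by blast
    then show "x + y \<in> bdry K ` chains (q + 1) L"
      using cs.subspace_add[OF S] bdry_add by (metis image_eqI)
  next
    fix c :: 'k and x :: "'v set \<Rightarrow> 'k" assume "x \<in> bdry K ` chains (q + 1) L"
    then obtain x' where "x' \<in> chains (q + 1) L" "x = bdry K x'" by blast
    then show "chain_scale c x \<in> bdry K ` chains (q + 1) L"
      using cs.subspace_scale[OF S] bdry_scale by (metis image_eqI)
  qed
qed

lemma chains_mono: "L \<subseteq> L' \<Longrightarrow> chains q L \<subseteq> chains q L'"
  unfolding chains_def by auto

lemma cycles_mono: "L \<subseteq> L' \<Longrightarrow> cycles K q L \<subseteq> cycles K q L'"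
  unfolding cycles_def using chains_mono by blast

lemma boundaries_mono: "L \<subseteq> L' \<Longrightarrow> boundaries K q L \<subseteq> boundaries K q L'"
  unfolding boundaries_def using chains_mono by blast

lemma chains_span:
  assumes "finite K"
  shows "(chains q K :: ('v set \<Rightarrow> 'k::field) set) \<subseteq> cs.span ((\<lambda>\<sigma> \<tau>. if \<tau> = \<sigma> then 1 else 0) ` K)"
proof
  fix c :: "'v set \<Rightarrow> 'k" assume c: "c \<in> chains q K"
  let ?e = "\<lambda>\<sigma> (\<tau>::'v set). if \<tau> = \<sigma> then (1::'k) else 0"
  have "c = (\<Sum>\<sigma>\<in>K. chain_scale (c \<sigma>) (?e \<sigma>))"
  proof
    fix \<tau>
    have "(\<Sum>\<sigma>\<in>K. chain_scale (c \<sigma>) (?e \<sigma>)) \<tau> = (\<Sum>\<sigma>\<in>K. c \<sigma> * ?e \<sigma> \<tau>)"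
      unfolding sum_fun_apply' chain_scale_def by simp
    also have "\<dots> = (\<Sum>\<sigma>\<in>K. if \<sigma> = \<tau> then c \<sigma> else 0)" by (rule sum.cong) auto
    also have "\<dots> = c \<tau>" using c assms unfolding chains_def by (auto simp: sum.delta')
    finally show "c \<tau> = (\<Sum>\<sigma>\<in>K. chain_scale (c \<sigma>) (?e \<sigma>)) \<tau>" by simp
  qed
  also have "\<dots> \<in> cs.span (?e ` K)"
    by (rule cs.span_sum) (auto intro: cs.span_scale cs.span_base)
  finally show "c \<in> cs.span (?e ` K)" .
qed



theorem mainTheorem2:
  fixes K :: "'v::linorder set set" and n q :: nat
    and F :: "nat \<times> nat \<Rightarrow> 'v set set" and d h :: "nat \<times> nat"
  assumes "finite K" and "simplicial_complex K"
    and "two_filtration K n F" and "non_degenerate n F"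
    and "d \<in> grid n" and "h \<in> grid n"
    and "pleq (1, 1) d" and "pleq d (fst h - 1, snd h - 1)"
  defines "a \<equiv> (fst d - 1, snd d - 1)" and "b \<equiv> (fst d - 1, snd d)"
    and "c \<equiv> (fst d, snd d - 1)" and "e \<equiv> (fst h - 1, snd h - 1)"
    and "f \<equiv> (fst h - 1, snd h)" and "g \<equiv> (fst h, snd h - 1)"
    and "zb \<equiv> ZB K n F TYPE('k::field) q"
  assumes "zb d h - zb d e - zb a h + zb a e = 1"
  shows "Dgm K n F TYPE('k) q d h =
     (1 - (zb b h - zb b e - zb a h + zb a e) - (zb c h - zb c e - zb a h + zb a e))
   * (1 - (zb d f - zb d e - zb a f + zb a e) - (zb d g - zb d e - zb a g + zb a e))"
proof -
  note TF = assms(3)[unfolded two_filtration_def]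
  have F_sub: "F x \<subseteq> K" if "x \<in> grid n" for x
    using TF that unfolding subcomplex_def by blast
  have F_mono: "F x \<subseteq> F y" if "x \<in> grid n" "y \<in> grid n" "pleq x y" for x y
    using TF that by blast
  define Zs :: "nat \<times> nat \<Rightarrow> ('v set \<Rightarrow> 'k) set" where "Zs x = cycles K q (F x)" for x
  define Bt :: "nat \<times> nat \<Rightarrow> ('v set \<Rightarrow> 'k) set"
    where "Bt y = (if y = (n, n) then UNIV else boundaries K q (F y))" for y
  have zbE: "zb x y = int (cs.dim (Zs x \<inter> Bt y))" for x y
    unfolding zb_def ZB_def vdim_def Zs_def Bt_def by simp
  obtain d1 d2 where dd: "d = (d1, d2)" by (cases d)
  obtain h1 h2 where hh: "h = (h1, h2)" by (cases h)
  have c1: "1 \<le> d1" "1 \<le> d2" "d1 + 1 \<le> h1" "d2 + 1 \<le> h2" "h1 \<le> n" "h2 \<le> n"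
    using assms(5-8) unfolding dd hh pleq_def grid_def by auto
  have pts: "a = (d1 - 1, d2 - 1)" "b = (d1 - 1, d2)" "c = (d1, d2 - 1)"
    "e = (h1 - 1, h2 - 1)" "f = (h1 - 1, h2)" "g = (h1, h2 - 1)"
    unfolding a_def b_def c_def e_def f_def g_def dd hh by simp_all
  have grid: "a \<in> grid n" "b \<in> grid n" "c \<in> grid n" "d \<in> grid n"
    "e \<in> grid n" "f \<in> grid n" "g \<in> grid n" "h \<in> grid n"
    unfolding pts dd hh grid_def using c1 by auto
  have le: "pleq a b" "pleq a c" "pleq b d" "pleq c d" "pleq e f" "pleq e g" "pleq f h" "pleq g h"
    unfolding pts dd hh pleq_def using c1 by auto
  have ntop: "e \<noteq> (n, n)" "f \<noteq> (n, n)" "g \<noteq> (n, n)"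
    unfolding pts using c1 by auto
  have Zmono: "Zs x \<subseteq> Zs y" if "x \<in> grid n" "y \<in> grid n" "pleq x y" for x y
    unfolding Zs_def by (rule cycles_mono[OF F_mono[OF that]])
  have Bmono: "Bt x \<subseteq> Bt y" if "x \<in> grid n" "y \<in> grid n" "pleq x y" "x \<noteq> (n, n)" for x y
    unfolding Bt_def using boundaries_mono[OF F_mono[OF that(1-3)]] that(4) by auto
  have Zsub: "cs.subspace (Zs x)" for x unfolding Zs_def by (rule cycles_sub)
  have Bsub: "cs.subspace (Bt y)" for y unfolding Bt_def by (simp add: boundaries_sub)
  define Wf :: "('v set \<Rightarrow> 'k) set" where "Wf = (\<lambda>\<sigma> \<tau>. if \<tau> = \<sigma> then 1 else 0) ` K"
  have fW: "finite Wf" unfolding Wf_def using assms(1) by simp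
  have ZdW: "Zs d \<subseteq> cs.span Wf"
  proof -
    have "Zs d \<subseteq> chains q (F d)" unfolding Zs_def cycles_def by blast
    also have "\<dots> \<subseteq> chains q K" by (rule chains_mono[OF F_sub[OF grid(4)]])
    also have "\<dots> \<subseteq> cs.span Wf" unfolding Wf_def by (rule chains_span[OF assms(1)])
    finally show ?thesis .
  qed
  have one: "Tq cs.dim (Zs a) (Bt e) (Zs d) (Bt h) = 1"
    using assms(16) unfolding Tq_def zbE by simp
  note AM = cs.abstract_main[OF Zsub[of a] Zsub[of b] Zsub[of c] Zsub[of d]
      Bsub[of e] Bsub[of f] Bsub[of g] Bsub[of h]
      Zmono[OF grid(1,2) le(1)] Zmono[OF grid(1,3) le(2)] Zmono[OF grid(2,4) le(3)] Zmono[OF grid(3,4) le(4)]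
      Bmono[OF grid(5,6) le(5) ntop(1)] Bmono[OF grid(5,7) le(6) ntop(1)]
      Bmono[OF grid(6,8) le(7) ntop(2)] Bmono[OF grid(7,8) le(8) ntop(3)] ZdW fW one]
  note M = eqs_16[OF Dgm_eqs[of n K F q] assms(5-8)]
  have M': "Dgm K n F TYPE('k) q d h = zb d h - zb b h - zb c h + zb a h - (zb d f - zb b f - zb c f + zb a f)
     - (zb d g - zb b g - zb c g + zb a g) + (zb d e - zb b e - zb c e + zb a e)"
    using M unfolding zb_def a_def b_def c_def e_def f_def g_def .
  have AM': "zb d h - zb b h - zb c h + zb a h - (zb d f - zb b f - zb c f + zb a f)
     - (zb d g - zb b g - zb c g + zb a g) + (zb d e - zb b e - zb c e + zb a e) =
     (1 - (zb b h - zb b e - zb a h + zb a e) - (zb c h - zb c e - zb a h + zb a e))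
   * (1 - (zb d f - zb d e - zb a f + zb a e) - (zb d g - zb d e - zb a g + zb a e))"
    using AM unfolding Tq_def zbE .
  show ?thesis using M' AM' by simp
qed

end
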